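(* The sequence $\langle\{P_n\}_{n\in\mathbb{N}},\{p^m_k\}_{k<m}\rangle$, where $P_n=\{0,1,2,3\}^n$ with order $\le_n$ and $p^m_k$ is restriction to the first $k$ coordinates, is a Fraïssé sequence in the category of finite posets with quotient maps; i.e. (U) for every finite poset $X$ there are $n$ and a quotient map $P_n\to X$; and (A) for every $k\in\mathbb{N}$, every finite poset $Y$ and every quotient map $f:Y\to P_k$ there exist $\ell>k$ and a quotient map $g:P_\ell\to Y$ with $f\circ g=p^\ell_k$.
   Context: $x\le_n y$ iff $x=y$ or (i) there is $l<n$ with $x(k)=y(k)$ for $k<l$, $x(l)=2$, $y(l)=3$, and $x(k)=y(k)\in\{0,1\}$ for $l<k<n$; or (ii) $x(0)=0$, $y(0)=1$ and $x(k)=y(k)\in\{0,1\}$ for $1\le k<n$ (coordinates indexed $0,\dots,n-1$). A quotient map between posets is a surjective order-preserving map $\phi:A\to B$ such that for all $p\le r$ in $B$ there are $x\le y$ in $A$ with $\phi(x)=p$, $\phi(y)=r$. *)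

theory Defs
  imports Main
begin

definition Pset :: "nat \<Rightarrow> nat list set" where
  "Pset n = {x. length x = n \<and> (\<forall>k<n. x ! k \<in> {0,1,2,3})}"

definition leP :: "nat \<Rightarrow> nat list \<Rightarrow> nat list \<Rightarrow> bool" where
  "leP n x y \<longleftrightarrow> x = y
     \<or> (\<exists>l<n. (\<forall>k<l. x ! k = y ! k) \<and> x ! l = 2 \<and> y ! l = 3
            \<and> (\<forall>k. l < k \<and> k < n \<longrightarrow> x ! k = y ! k \<and> x ! k \<in> {0,1}))
     \<or> (0 < n \<and> x ! 0 = 0 \<and> y ! 0 = 1
            \<and> (\<forall>k. 1 \<le> k \<and> k < n \<longrightarrow> x ! k = y ! k \<and> x ! k \<in> {0,1}))"

definition proj :: "nat \<Rightarrow> nat list \<Rightarrow> nat list" where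
  "proj k x = take k x"

definition finite_poset :: "'a set \<Rightarrow> ('a \<Rightarrow> 'a \<Rightarrow> bool) \<Rightarrow> bool" where
  "finite_poset A le \<longleftrightarrow> finite A
     \<and> (\<forall>x\<in>A. le x x)
     \<and> (\<forall>x\<in>A. \<forall>y\<in>A. le x y \<and> le y x \<longrightarrow> x = y)
     \<and> (\<forall>x\<in>A. \<forall>y\<in>A. \<forall>z\<in>A. le x y \<and> le y z \<longrightarrow> le x z)"

definition quotient_map ::
  "'a set \<Rightarrow> ('a \<Rightarrow> 'a \<Rightarrow> bool) \<Rightarrow> 'b set \<Rightarrow> ('b \<Rightarrow> 'b \<Rightarrow> bool) \<Rightarrow> ('a \<Rightarrow> 'b) \<Rightarrow> bool" where
  "quotient_map A leA B leB \<phi> \<longleftrightarrow> \<phi> ` A = B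
     \<and> (\<forall>x\<in>A. \<forall>y\<in>A. leA x y \<longrightarrow> leB (\<phi> x) (\<phi> y))
     \<and> (\<forall>p\<in>B. \<forall>r\<in>B. leB p r \<longrightarrow> (\<exists>x\<in>A. \<exists>y\<in>A. leA x y \<and> \<phi> x = p \<and> \<phi> y = r))"

end

theory Submission
  imports Defs
begin


lemma leP_refl: "leP n x x" by (simp add: leP_def)

lemma leP_strictE:
  assumes "leP n x y" "x \<noteq> y"
  obtains l where "l<n" "\<forall>k<l. x ! k = y ! k" "x ! l = 2" "y ! l = 3"
            "\<forall>k. l < k \<and> k < n \<longrightarrow> x ! k = y ! k \<and> x ! k \<in> {0,1}"
   | "0 < n" "x ! 0 = 0" "y ! 0 = 1" "\<forall>k. 1 \<le> k \<and> k < n \<longrightarrow> x ! k = y ! k \<and> x ! k \<in> {0,1}"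
    using assms(1) unfolding leP_def
proof (elim disjE)
  assume "x = y" then show thesis using assms(2) by simp
next
  assume "\<exists>l<n. (\<forall>k<l. x ! k = y ! k) \<and> x ! l = 2 \<and> y ! l = 3
            \<and> (\<forall>k. l < k \<and> k < n \<longrightarrow> x ! k = y ! k \<and> x ! k \<in> {0,1})"
  then obtain l where "l<n" "\<forall>k<l. x ! k = y ! k" "x ! l = 2" "y ! l = 3"
            "\<forall>k. l < k \<and> k < n \<longrightarrow> x ! k = y ! k \<and> x ! k \<in> {0,1}" by (elim exE conjE)
  then show thesis by (rule that(1))
next
  assume "0 < n \<and> x ! 0 = 0 \<and> y ! 0 = 1
            \<and> (\<forall>k. 1 \<le> k \<and> k < n \<longrightarrow> x ! k = y ! k \<and> x ! k \<in> {0,1})"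
  then show thesis by (elim conjE) (rule that(2))
qed



lemma leP_F3:
  assumes "leP n x y" "x \<noteq> y" "leP n y z" shows "y = z"
proof (rule ccontr)
  assume yz: "y \<noteq> z"
  show False
  using assms(1,2)
  proof (cases rule: leP_strictE)
    case (1 l)
    have y3: "y ! l = 3" and yl: "\<And>k. l < k \<Longrightarrow> k < n \<Longrightarrow> y ! k \<in> {0,1}" using 1 by auto
    show False using assms(3) yz
    proof (cases rule: leP_strictE)
      case (1 l')
      then have "y ! l' = 2" by simp
      consider "l < l'" | "l' < l" | "l = l'" by linarith
      then show False
      proof cases
        case 1 then show False using yl[of l'] \<open>y ! l' = 2\<close> \<open>l' < n\<close> by simp
      next
        case 2 then show False using \<open>\<forall>k. l' < k \<and> k < n \<longrightarrow> y ! k = z ! k \<and> y ! k \<in> {0,1}\<close> y3 \<open>l < n\<close> by force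
      next
        case 3 then show False using y3 \<open>y ! l' = 2\<close> by simp
      qed
    next
      case 2
      show False
      proof (cases l)
        case 0 then show False using y3 2 by simp
      next
        case (Suc m) then show False using 2(4) y3 \<open>l < n\<close> by force
      qed
    qed
  next
    case 2
    show False using assms(3) yz
    proof (cases rule: leP_strictE)
      case (1 l')
      show False
      proof (cases l')
        case 0 then show False using 1 2 by simp
      next
        case (Suc m) then show False using 1 2(4) by force
      qed
    next
      case 2
      then show False using \<open>y ! 0 = 1\<close> by simp
    qed
  qed
qed

lemma leP_F1:
  assumes "leP n x y" "x \<noteq> y" "leP n x y'" "x \<noteq> y'" "length y = n" "length y' = n"
  shows "y = y'"
proof (rule nth_equalityI)
  show "length y = length y'" using assms by simp
  fix i assume "i < length y"
  hence i: "i < n" using assms by simp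
  show "y ! i = y' ! i"
  using assms(1,2)
  proof (cases rule: leP_strictE)
    case (1 l)
    show ?thesis using assms(3,4)
    proof (cases rule: leP_strictE)
      case (1 l')
      have "l = l'"
      proof (rule ccontr)
        assume "l \<noteq> l'"
        then consider "l < l'" | "l' < l" by linarith
        then show False
        proof cases
          case a: 1 show False using a \<open>l' < n\<close> \<open>x ! l' = 2\<close> \<open>\<forall>k. l < k \<and> k < n \<longrightarrow> x ! k = y ! k \<and> x ! k \<in> {0,1}\<close> by force
        next
          case a: 2 show False using a \<open>l < n\<close> \<open>x ! l = 2\<close> \<open>\<forall>k. l' < k \<and> k < n \<longrightarrow> x ! k = y' ! k \<and> x ! k \<in> {0,1}\<close> by force
        qed
      qed
      consider "i < l" | "i = l" | "l < i" by linarith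
      then show ?thesis
      proof cases
        case a: 1 then show ?thesis using \<open>l = l'\<close> \<open>\<forall>k<l. x ! k = y ! k\<close> \<open>\<forall>k<l'. x ! k = y' ! k\<close> by simp
      next
        case a: 2 then show ?thesis using \<open>l = l'\<close> \<open>y ! l = 3\<close> \<open>y' ! l' = 3\<close> by simp
      next
        case a: 3 then show ?thesis using \<open>l = l'\<close> i \<open>\<forall>k. l < k \<and> k < n \<longrightarrow> x ! k = y ! k \<and> x ! k \<in> {0,1}\<close> \<open>\<forall>k. l' < k \<and> k < n \<longrightarrow> x ! k = y' ! k \<and> x ! k \<in> {0,1}\<close> by simp
      qed
    next
      case 2
      show ?thesis
      proof (cases l)
        case 0 then show ?thesis using 2 \<open>x ! l = 2\<close> by simp
      next
        case (Suc m) then show ?thesis using 2(4) \<open>x ! l = 2\<close> \<open>l < n\<close> by force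
      qed
    qed
  next
    case 2
    show ?thesis using assms(3,4)
    proof (cases rule: leP_strictE)
      case (1 l')
      show ?thesis
      proof (cases l')
        case 0 then show ?thesis using 1 \<open>x ! 0 = 0\<close> by simp
      next
        case (Suc m) then show ?thesis using 2(4) \<open>x ! l' = 2\<close> \<open>l' < n\<close> by force
      qed
    next
      case b: 2
      show ?thesis
      proof (cases i)
        case 0 then show ?thesis using 2 b by simp
      next
        case (Suc m) then show ?thesis using 2(4) b(4) i by simp
      qed
    qed
  qed
qed

lemma leP_F2:
  assumes "leP n x y" "x \<noteq> y" "leP n x' y" "x' \<noteq> y" "length x = n" "length x' = n"
  shows "x = x'"
proof (rule nth_equalityI)
  show "length x = length x'" using assms by simp
  fix i assume "i < length x"
  hence i: "i < n" using assms by simp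
  show "x ! i = x' ! i"
  using assms(1,2)
  proof (cases rule: leP_strictE)
    case (1 l)
    show ?thesis using assms(3,4)
    proof (cases rule: leP_strictE)
      case (1 l')
      have "l = l'"
      proof (rule ccontr)
        assume "l \<noteq> l'"
        then consider "l < l'" | "l' < l" by linarith
        then show False
        proof cases
          case a: 1 show False using a \<open>l' < n\<close> \<open>y ! l' = 3\<close> \<open>\<forall>k. l < k \<and> k < n \<longrightarrow> x ! k = y ! k \<and> x ! k \<in> {0,1}\<close> by force
        next
          case a: 2 show False using a \<open>l < n\<close> \<open>y ! l = 3\<close> \<open>\<forall>k. l' < k \<and> k < n \<longrightarrow> x' ! k = y ! k \<and> x' ! k \<in> {0,1}\<close> by force
        qed
      qed
      consider "i < l" | "i = l" | "l < i" by linarith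
      then show ?thesis
      proof cases
        case a: 1 then show ?thesis using \<open>l = l'\<close> \<open>\<forall>k<l. x ! k = y ! k\<close> \<open>\<forall>k<l'. x' ! k = y ! k\<close> by simp
      next
        case a: 2 then show ?thesis using \<open>l = l'\<close> \<open>x ! l = 2\<close> \<open>x' ! l' = 2\<close> by simp
      next
        case a: 3 then show ?thesis using \<open>l = l'\<close> i \<open>\<forall>k. l < k \<and> k < n \<longrightarrow> x ! k = y ! k \<and> x ! k \<in> {0,1}\<close> \<open>\<forall>k. l' < k \<and> k < n \<longrightarrow> x' ! k = y ! k \<and> x' ! k \<in> {0,1}\<close> by simp
      qed
    next
      case 2
      show ?thesis
      proof (cases l)
        case 0 then show ?thesis using 2 \<open>y ! l = 3\<close> by simp
      next
        case (Suc m) then show ?thesis using 2(4) 1 \<open>y ! l = 3\<close> \<open>l < n\<close> by force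
      qed
    qed
  next
    case 2
    show ?thesis using assms(3,4)
    proof (cases rule: leP_strictE)
      case (1 l')
      show ?thesis
      proof (cases l')
        case 0 then show ?thesis using 1 \<open>y ! 0 = 1\<close> by simp
      next
        case (Suc m) then show ?thesis using 2(4) 1 \<open>y ! l' = 3\<close> \<open>l' < n\<close> by force
      qed
    next
      case b: 2
      show ?thesis
      proof (cases i)
        case 0 then show ?thesis using 2 b by simp
      next
        case (Suc m) then show ?thesis using 2(4) b(4) i by simp
      qed
    qed
  qed
qed


lemma leP_take:
  assumes "leP n x y" "length x = n" "length y = n" "k \<le> n"
  shows "leP k (take k x) (take k y)"
proof (cases "x = y")
  case True then show ?thesis by (simp add: leP_def)
next
  case False
  show ?thesis
  using assms(1) False
  proof (cases rule: leP_strictE)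
    case (1 l)
    show ?thesis
    proof (cases "l < k")
      case True
      have "(\<forall>i<l. take k x ! i = take k y ! i) \<and> take k x ! l = 2 \<and> take k y ! l = 3
            \<and> (\<forall>i. l < i \<and> i < k \<longrightarrow> take k x ! i = take k y ! i \<and> take k x ! i \<in> {0,1})"
        using 1 True assms(4) by auto
      note C = this
      show ?thesis unfolding leP_def apply (rule disjI2, rule disjI1, rule exI[of _ l], rule conjI) using True apply simp by (rule C)
    next
      case False
      have "take k x = take k y"
      proof (rule nth_equalityI)
        show "length (take k x) = length (take k y)" using assms by simp
        fix i assume "i < length (take k x)"
        then have "i < k" "i < l" using False by auto
        then show "take k x ! i = take k y ! i" using 1 by simp
      qed
      then show ?thesis by (simp add: leP_def)
    qed
  next
    case 2
    show ?thesis
    proof (cases "0 < k")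
      case True
      have "0 < k \<and> take k x ! 0 = 0 \<and> take k y ! 0 = 1
            \<and> (\<forall>i. 1 \<le> i \<and> i < k \<longrightarrow> take k x ! i = take k y ! i \<and> take k x ! i \<in> {0,1})"
        using 2 True assms(4) by auto
      note C = this
      show ?thesis unfolding leP_def apply (rule disjI2, rule disjI2) by (rule C)
    next
      case False
      then show ?thesis by (simp add: leP_def)
    qed
  qed
qed


lemma count_list_replicate: "count_list (replicate n a) b = (if a = b then n else 0)"
  by (induction n) auto

lemma PsetI: "set xs \<subseteq> {0,1,2,3} \<Longrightarrow> length xs = n \<Longrightarrow> xs \<in> Pset n"
  unfolding Pset_def using nth_mem by blast

lemma Pset_set: "xs \<in> Pset n \<Longrightarrow> v \<in> set xs \<Longrightarrow> v \<in> {0,1,2,3}"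
proof -
  assume "xs \<in> Pset n" "v \<in> set xs"
  then obtain i where "i < length xs" "xs ! i = v" by (auto simp: in_set_conv_nth)
  then show ?thesis using \<open>xs \<in> Pset n\<close> unfolding Pset_def by auto
qed

lemma tail01:
  assumes "set t \<subseteq> {0,1}" "length a = k" "k < j" "j < k + 1 + length t"
  shows "(a @ c # t) ! j \<in> {0,1}"
proof -
  obtain d where j: "j = Suc k + d" using assms(3) less_imp_Suc_add by blast
  have "d < length t" using assms(4) j by simp
  then have "t ! d \<in> {0,1}" using assms(1) nth_mem by blast
  then show ?thesis using assms(2) j by (simp add: nth_append)
qed

lemma construct:
  fixes a b t :: "nat list"
  assumes a: "a \<in> Pset k" and b: "b \<in> Pset k" and ab: "leP k a b"
    and t: "set t \<subseteq> {0,1}"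
  defines "x \<equiv> a @ (if a = b then 2 else 0) # t"
    and "y \<equiv> b @ (if a = b then 3 else 0) # t"
  shows "x \<in> Pset (k + 1 + length t)" "y \<in> Pset (k + 1 + length t)"
    "leP (k + 1 + length t) x y" "x \<noteq> y" "take k x = a" "take k y = b" "drop (Suc k) x = t"
proof -
  have la: "length a = k" and lb: "length b = k" using a b by (auto simp: Pset_def)
  let ?n = "k + 1 + length t"
  have tn: "\<And>i. i < length t \<Longrightarrow> t ! i \<in> {0,1}" using t nth_mem by blast
  have sa: "set a \<subseteq> {0,1,2,3}" and sb: "set b \<subseteq> {0,1,2,3}" using a b
    by (auto dest: Pset_set)
  show "x \<in> Pset ?n" apply (rule PsetI) using sa t la by (auto simp: x_def)
  show "y \<in> Pset ?n" apply (rule PsetI) using sb t lb by (auto simp: y_def)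
  show "take k x = a" "take k y = b" "drop (Suc k) x = t" using la lb by (auto simp: x_def y_def)
  show "x \<noteq> y"
  proof (cases "a = b")
    case True then show ?thesis by (simp add: x_def y_def)
  next
    case False
    then show ?thesis unfolding x_def y_def using la lb by auto
  qed
  have lt: "\<And>i c. i < k \<Longrightarrow> (a @ c # t) ! i = a ! i" "\<And>i c. i < k \<Longrightarrow> (b @ c # t) ! i = b ! i"
    using la lb by (auto simp: nth_append)
  have eqk: "\<And>c. (a @ c # t) ! k = c" "\<And>c. (b @ c # t) ! k = c" using la lb by (auto simp: nth_append)
  have teq: "\<And>i c c'. k < i \<Longrightarrow> (a @ c # t) ! i = (b @ c' # t) ! i"
  proof -
    fix i c c' assume "k < i"
    then obtain d where "i = Suc k + d" using less_imp_Suc_add by blast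
    then show "(a @ c # t) ! i = (b @ c' # t) ! i" using la lb by (simp add: nth_append)
  qed
  have t01: "\<And>i c. k < i \<Longrightarrow> i < ?n \<Longrightarrow> (a @ c # t) ! i \<in> {0,1}" using tail01[OF t la] by blast
  have xi: "\<And>i. i < k \<Longrightarrow> x ! i = a ! i" "\<And>i. i < k \<Longrightarrow> y ! i = b ! i"
    unfolding x_def y_def using lt by blast+
  have xk: "x ! k = (if a = b then 2 else 0)" "y ! k = (if a = b then 3 else 0)"
    unfolding x_def y_def using eqk by blast+
  have xt: "\<And>i. k < i \<Longrightarrow> x ! i = y ! i" unfolding x_def y_def using teq by blast
  have xt01: "\<And>i. k < i \<Longrightarrow> i < ?n \<Longrightarrow> x ! i \<in> {0,1}" unfolding x_def using t01 by blast
  show "leP ?n x y"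
  proof (cases "a = b")
    case True
    have "(\<forall>i<k. x ! i = y ! i) \<and> x ! k = 2 \<and> y ! k = 3
            \<and> (\<forall>i. k < i \<and> i < ?n \<longrightarrow> x ! i = y ! i \<and> x ! i \<in> {0,1})"
      using True xi xk xt xt01 by simp
    note C = this
    show ?thesis unfolding leP_def apply (rule disjI2, rule disjI1, rule exI[of _ k], rule conjI) apply simp by (rule C)
  next
    case False
    have mid: "x ! i = y ! i \<and> x ! i \<in> {0,1}" if "j < i" "i < ?n" "\<forall>i. j < i \<and> i < k \<longrightarrow> a ! i = b ! i \<and> a ! i \<in> {0,1}" for i j
    proof -
      consider "i < k" | "i = k" | "k < i" by linarith
      then show ?thesis
      proof cases
        case 1
        have A: "a ! i = b ! i \<and> a ! i \<in> {0,1}" using that(1,3) 1 by blast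
        have xa: "x ! i = a ! i" and ya: "y ! i = b ! i" using xi 1 by auto
        show ?thesis unfolding xa ya by (rule A)
      next
        case 2 then show ?thesis using False xk by simp
      next
        case 3 then show ?thesis using xt xt01 that by blast
      qed
    qed
    from ab False show ?thesis
    proof (cases rule: leP_strictE)
      case (1 l)
      have "(\<forall>i<l. x ! i = y ! i) \<and> x ! l = 2 \<and> y ! l = 3
            \<and> (\<forall>i. l < i \<and> i < ?n \<longrightarrow> x ! i = y ! i \<and> x ! i \<in> {0,1})"
      proof (intro conjI allI impI)
        show "x ! i = y ! i" if "i < l" for i using that 1 xi by simp
        show "x ! l = 2" "y ! l = 3" using 1 xi by simp_all
        fix i assume i: "l < i \<and> i < ?n"
        have "x ! i = y ! i \<and> x ! i \<in> {0,1}" using mid[OF _ _ 1(5)] i by blast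
        then show "x ! i = y ! i" "x ! i \<in> {0,1}" by blast+
      qed
      note C = this
      show ?thesis unfolding leP_def apply (rule disjI2, rule disjI1, rule exI[of _ l], rule conjI) using 1(1) apply simp by (rule C)
    next
      case 2
      have "0 < ?n \<and> x ! 0 = 0 \<and> y ! 0 = 1
            \<and> (\<forall>i. 1 \<le> i \<and> i < ?n \<longrightarrow> x ! i = y ! i \<and> x ! i \<in> {0,1})"
      proof (intro conjI allI impI)
        show "0 < ?n" by simp
        show "x ! 0 = 0" "y ! 0 = 1" using 2 xi by simp_all
        fix i assume i: "1 \<le> i \<and> i < ?n"
        have "\<forall>i'. 0 < i' \<and> i' < k \<longrightarrow> a ! i' = b ! i' \<and> a ! i' \<in> {0,1}"
        proof (intro allI impI)
          fix i' :: nat assume "0 < i' \<and> i' < k"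
          then have "1 \<le> i' \<and> i' < k" by simp
          then show "a ! i' = b ! i' \<and> a ! i' \<in> {0,1}" using 2(4) by blast
        qed
        note P = this
        have i0: "0 < i" "i < ?n" using i by auto
        have "x ! i = y ! i \<and> x ! i \<in> {0,1}" by (rule mid[OF i0 P])
        then show "x ! i = y ! i" "x ! i \<in> {0,1}" by blast+
      qed
      note C = this
      show ?thesis unfolding leP_def apply (rule disjI2, rule disjI2) by (rule C)
    qed
  qed
qed


definition Sset :: "'b set \<Rightarrow> ('b \<Rightarrow> 'b \<Rightarrow> bool) \<Rightarrow> ('b \<Rightarrow> nat list) \<Rightarrow> nat list \<Rightarrow> nat list \<Rightarrow> ('b \<times> 'b) set" where
  "Sset Y le f a b = {(p,r). p \<in> Y \<and> r \<in> Y \<and> le p r \<and> f p = a \<and> f r = b}"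

definition pairsY :: "'b set \<Rightarrow> ('b \<Rightarrow> 'b \<Rightarrow> bool) \<Rightarrow> ('b \<Rightarrow> nat list) \<Rightarrow> nat list \<Rightarrow> nat list \<Rightarrow> ('b \<times> 'b) list" where
  "pairsY Y le f a b = (SOME xs. set xs = Sset Y le f a b \<and> distinct xs)"

lemma pairsY: assumes "finite Y" shows "set (pairsY Y le f a b) = Sset Y le f a b \<and> distinct (pairsY Y le f a b)"
proof -
  have "Sset Y le f a b \<subseteq> Y \<times> Y" by (auto simp: Sset_def)
  then have "finite (Sset Y le f a b)" using assms by (meson finite_SigmaI finite_subset)
  then have "\<exists>xs. set xs = Sset Y le f a b \<and> distinct xs" by (rule finite_distinct_list)
  then show ?thesis unfolding pairsY_def by (rule someI_ex)
qed

definition hY :: "'b set \<Rightarrow> ('b \<Rightarrow> 'b \<Rightarrow> bool) \<Rightarrow> ('b \<Rightarrow> nat list) \<Rightarrow> nat \<Rightarrow> nat list \<Rightarrow> nat list \<Rightarrow> 'b \<times> 'b" where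
  "hY Y le f k x y = (let ps = pairsY Y le f (take k x) (take k y); i = count_list (drop (Suc k) x) 1
     in if i < length ps then ps ! i else hd ps)"

definition gY :: "'b set \<Rightarrow> ('b \<Rightarrow> 'b \<Rightarrow> bool) \<Rightarrow> ('b \<Rightarrow> nat list) \<Rightarrow> nat \<Rightarrow> nat \<Rightarrow> nat list \<Rightarrow> 'b" where
  "gY Y le f k l x = (if \<exists>y\<in>Pset l. y \<noteq> x \<and> leP l x y
      then fst (hY Y le f k x (SOME y. y\<in>Pset l \<and> y \<noteq> x \<and> leP l x y))
     else if \<exists>y\<in>Pset l. y \<noteq> x \<and> leP l y x
      then snd (hY Y le f k (SOME y. y\<in>Pset l \<and> y \<noteq> x \<and> leP l y x) x)
     else fst (hd (pairsY Y le f (take k x) (take k x))))"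

lemma SsetD: "pr \<in> Sset Y le f a b \<Longrightarrow> fst pr \<in> Y \<and> snd pr \<in> Y \<and> le (fst pr) (snd pr) \<and> f (fst pr) = a \<and> f (snd pr) = b"
  unfolding Sset_def by (cases pr) simp

lemma main_A:
  fixes Y :: "'b set"
  assumes fp: "finite_poset Y le" and q: "quotient_map Y le (Pset k) (leP k) f"
  shows "\<exists>l g. l > k \<and> quotient_map (Pset l) (leP l) Y le g \<and> (\<forall>x\<in>Pset l. f (g x) = proj k x)"
proof -
  have fp': "finite Y \<and> (\<forall>x\<in>Y. le x x)" using fp by (simp add: finite_poset_def)
  have finY: "finite Y" and refl: "\<And>p. p \<in> Y \<Longrightarrow> le p p" using fp' by blast+
  have fimg: "f ` Y = Pset k" and fmono: "\<And>p r. p \<in> Y \<Longrightarrow> r \<in> Y \<Longrightarrow> le p r \<Longrightarrow> leP k (f p) (f r)"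
    and flift: "\<And>a b. a \<in> Pset k \<Longrightarrow> b \<in> Pset k \<Longrightarrow> leP k a b \<Longrightarrow> \<exists>p\<in>Y. \<exists>r\<in>Y. le p r \<and> f p = a \<and> f r = b"
  proof -
    have qq: "f ` Y = Pset k \<and> (\<forall>x\<in>Y. \<forall>y\<in>Y. le x y \<longrightarrow> leP k (f x) (f y))
     \<and> (\<forall>p\<in>Pset k. \<forall>r\<in>Pset k. leP k p r \<longrightarrow> (\<exists>x\<in>Y. \<exists>y\<in>Y. le x y \<and> f x = p \<and> f y = r))"
      using q unfolding quotient_map_def by this
    show "f ` Y = Pset k" using qq by (rule conjunct1)
    show "\<And>p r. p \<in> Y \<Longrightarrow> r \<in> Y \<Longrightarrow> le p r \<Longrightarrow> leP k (f p) (f r)"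
      using conjunct1[OF conjunct2[OF qq]] by blast
    show "\<And>a b. a \<in> Pset k \<Longrightarrow> b \<in> Pset k \<Longrightarrow> leP k a b \<Longrightarrow> \<exists>p\<in>Y. \<exists>r\<in>Y. le p r \<and> f p = a \<and> f r = b"
      using conjunct2[OF conjunct2[OF qq]] by blast
  qed
  define m where "m = card (Y \<times> Y)"
  define l where "l = k + 1 + m"
  define g where "g = gY Y le f k l"
  let ?ps = "pairsY Y le f"
  have N: "?ps a b \<noteq> [] \<and> set (?ps a b) = Sset Y le f a b \<and> distinct (?ps a b)"
    if "a \<in> Pset k" "b \<in> Pset k" "leP k a b" for a b
  proof -
    from flift[OF that] obtain p r where "p\<in>Y" "r\<in>Y" "le p r" "f p = a" "f r = b" by blast
    then have "(p,r) \<in> Sset Y le f a b" by (simp add: Sset_def)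
    then show ?thesis using pairsY[OF finY, of le f a b] by auto
  qed
  have lenP: "length x = n" if "x \<in> Pset n" for x n using that by (simp add: Pset_def)
  have takeP: "take k x \<in> Pset k" if "x \<in> Pset l" for x
  proof -
    have "length x = l" "\<forall>i<l. x ! i \<in> {0,1,2,3}" using that by (simp_all add: Pset_def)
    moreover have "k \<le> l" by (simp add: l_def)
    ultimately show ?thesis unfolding Pset_def by auto
  qed
  have H: "hY Y le f k x y \<in> Sset Y le f (take k x) (take k y)"
    if "x \<in> Pset l" "y \<in> Pset l" "leP l x y" for x y
  proof -
    have "leP k (take k x) (take k y)"
      by (rule leP_take[OF that(3)]) (use that lenP in \<open>auto simp: l_def\<close>)
    from N[OF takeP[OF that(1)] takeP[OF that(2)] this]
    have ne: "?ps (take k x) (take k y) \<noteq> []" and st: "set (?ps (take k x) (take k y)) = Sset Y le f (take k x) (take k y)" by blast+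
    have "hY Y le f k x y \<in> set (?ps (take k x) (take k y))"
      unfolding hY_def Let_def using ne by (simp add: hd_in_set)
    then show ?thesis using st by simp
  qed
  have G1: "g x = fst (hY Y le f k x y) \<and> g y = snd (hY Y le f k x y)"
    if xy: "x \<in> Pset l" "y \<in> Pset l" "leP l x y" "x \<noteq> y" for x y
  proof
    have ex1: "\<exists>y\<in>Pset l. y \<noteq> x \<and> leP l x y" using conjI[OF not_sym[OF xy(4)] xy(3)] xy(2) by (rule bexI[where x=y])
    have "(SOME y. y\<in>Pset l \<and> y \<noteq> x \<and> leP l x y) = y"
    proof (rule some_equality)
      show "y\<in>Pset l \<and> y \<noteq> x \<and> leP l x y" using xy by blast
      fix y' assume "y'\<in>Pset l \<and> y' \<noteq> x \<and> leP l x y'"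
      then have "y' \<in> Pset l" "y' \<noteq> x" "leP l x y'" by blast+
      have "x \<noteq> y'" using \<open>y' \<noteq> x\<close> by (rule not_sym)
      from leP_F1[OF xy(3) xy(4) \<open>leP l x y'\<close> this lenP[OF xy(2)] lenP[OF \<open>y' \<in> Pset l\<close>]]
      show "y' = y" by (rule sym)
    qed
    note s1 = this
    show "g x = fst (hY Y le f k x y)" unfolding g_def gY_def if_P[OF ex1] s1 ..
    have ex2: "\<not> (\<exists>z\<in>Pset l. z \<noteq> y \<and> leP l y z)" 
    proof
      assume "\<exists>z\<in>Pset l. z \<noteq> y \<and> leP l y z"
      then obtain z where "z \<noteq> y" "leP l y z" by blast
      from leP_F3[OF xy(3,4) \<open>leP l y z\<close>] \<open>z \<noteq> y\<close> show False by simp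
    qed
    have ex3: "\<exists>z\<in>Pset l. z \<noteq> y \<and> leP l z y" using conjI[OF xy(4) xy(3)] xy(1) by (rule bexI[where x=x])
    have "(SOME z. z\<in>Pset l \<and> z \<noteq> y \<and> leP l z y) = x"
    proof (rule some_equality)
      show "x\<in>Pset l \<and> x \<noteq> y \<and> leP l x y" using xy by blast
      fix x' assume "x'\<in>Pset l \<and> x' \<noteq> y \<and> leP l x' y"
      then have "x' \<in> Pset l" "x' \<noteq> y" "leP l x' y" by blast+
      from leP_F2[OF xy(3) xy(4) \<open>leP l x' y\<close> \<open>x' \<noteq> y\<close> lenP[OF xy(1)] lenP[OF \<open>x' \<in> Pset l\<close>]]
      show "x' = x" by (rule sym)
    qed
    note s2 = this
    show "g y = snd (hY Y le f k x y)" unfolding g_def gY_def if_not_P[OF ex2] if_P[OF ex3] s2 ..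
  qed
  have G0: "g x \<in> Y \<and> f (g x) = take k x" if x: "x \<in> Pset l" for x
  proof (cases "\<exists>y\<in>Pset l. y \<noteq> x \<and> leP l x y")
    case True
    then obtain y where "y\<in>Pset l" "y \<noteq> x" "leP l x y" by blast
    with G1[of x y] SsetD[OF H[of x y]] x show ?thesis by simp
  next
    case False
    show ?thesis
    proof (cases "\<exists>y\<in>Pset l. y \<noteq> x \<and> leP l y x")
      case True
      then obtain y where "y\<in>Pset l" "y \<noteq> x" "leP l y x" by blast
      with G1[of y x] SsetD[OF H[of y x]] x show ?thesis by simp
    next
      case False2: False
      have "?ps (take k x) (take k x) \<noteq> [] \<and> set (?ps (take k x) (take k x)) = Sset Y le f (take k x) (take k x)"
        using N[OF takeP[OF x] takeP[OF x] leP_refl] by blast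
      then have "hd (?ps (take k x) (take k x)) \<in> Sset Y le f (take k x) (take k x)"
        using hd_in_set by blast
      note hh = SsetD[OF this]
      have "g x = fst (hd (?ps (take k x) (take k x)))" unfolding g_def gY_def if_not_P[OF False] if_not_P[OF False2] ..
      then show ?thesis using hh by simp
    qed
  qed
  have C: "\<exists>x\<in>Pset l. \<exists>y\<in>Pset l. leP l x y \<and> x \<noteq> y \<and> hY Y le f k x y = (p,r)"
    if pr: "p \<in> Y" "r \<in> Y" "le p r" for p r
  proof -
    define a where "a = f p"
    define b where "b = f r"
    have a: "a \<in> Pset k" and b: "b \<in> Pset k" using pr fimg by (auto simp: a_def b_def)
    have ab: "leP k a b" using fmono[OF pr] by (simp add: a_def b_def)
    have Nab: "?ps a b \<noteq> [] \<and> set (?ps a b) = Sset Y le f a b \<and> distinct (?ps a b)" using N[OF a b ab] .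
    have mem: "(p,r) \<in> set (?ps a b)" using Nab pr by (simp add: Sset_def a_def b_def)
    obtain i where ilt: "i < length (?ps a b)" and nth: "?ps a b ! i = (p,r)" using mem by (auto simp: in_set_conv_nth)
    have "length (?ps a b) = card (Sset Y le f a b)" using Nab distinct_card by fastforce
    also have "\<dots> \<le> m" unfolding m_def using finY by (intro card_mono) (auto simp: Sset_def)
    finally have im: "i \<le> m" using ilt by simp
    define t :: "nat list" where "t = replicate i 1 @ replicate (m - i) 0"
    have t: "set t \<subseteq> {0,1}" "length t = m" "count_list t 1 = i" using im
      by (auto simp: t_def count_list_replicate)
    note cs = construct[OF a b ab t(1)]
    show ?thesis
      apply (rule bexI[OF _ cs(1)[unfolded t(2) l_def[symmetric]]])
      apply (rule bexI[OF _ cs(2)[unfolded t(2) l_def[symmetric]]])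
      using cs(3)[unfolded t(2) l_def[symmetric]] cs(4-7) ilt nth t(3)
      by (simp add: hY_def Let_def)
  qed
  have "quotient_map (Pset l) (leP l) Y le g"
    unfolding quotient_map_def
  proof (intro conjI ballI impI)
    show "g ` Pset l = Y"
    proof
      show "g ` Pset l \<subseteq> Y" using G0 by blast
      show "Y \<subseteq> g ` Pset l"
      proof
        fix p assume p: "p \<in> Y"
        from C[OF p p refl[OF p]] obtain x y where "x\<in>Pset l" "y\<in>Pset l" "leP l x y" "x \<noteq> y" "hY Y le f k x y = (p,p)" by blast
        with G1[of x y] show "p \<in> g ` Pset l" by force
      qed
    qed
  next
    fix x y assume xy: "x \<in> Pset l" "y \<in> Pset l" "leP l x y"
    show "le (g x) (g y)"
    proof (cases "x = y")
      case True then show ?thesis using G0 xy refl by simp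
    next
      case False
      with G1[OF xy False] H[OF xy] show ?thesis by (auto simp: Sset_def split: prod.splits)
    qed
  next
    fix p r assume "p \<in> Y" "r \<in> Y" "le p r"
    from C[OF this] obtain x y where "x\<in>Pset l" "y\<in>Pset l" "leP l x y" "x \<noteq> y" "hY Y le f k x y = (p,r)" by blast
    with G1[of x y] show "\<exists>x\<in>Pset l. \<exists>y\<in>Pset l. leP l x y \<and> g x = p \<and> g y = r" by force
  qed
  moreover have "\<forall>x\<in>Pset l. f (g x) = proj k x" using G0 by (simp add: proj_def)
  moreover have "l > k" by (simp add: l_def)
  ultimately show ?thesis by blast
qed

theorem mainTheorem3:
  shows "(\<forall>(X :: 'a set) leX. finite_poset X leX \<and> X \<noteq> {} \<longrightarrow>
            (\<exists>n \<phi>. quotient_map (Pset n) (leP n) X leX \<phi>))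
       \<and> (\<forall>k (Y :: 'b set) leY f. finite_poset Y leY \<and> quotient_map Y leY (Pset k) (leP k) f \<longrightarrow>
            (\<exists>l g. l > k \<and> quotient_map (Pset l) (leP l) Y leY g
                   \<and> (\<forall>x\<in>Pset l. f (g x) = proj k x)))"
proof (intro conjI allI impI)
  fix X :: "'a set" and leX assume X: "finite_poset X leX \<and> X \<noteq> {}"
  have P0: "Pset 0 = {[]}" by (auto simp: Pset_def)
  have "quotient_map X leX (Pset 0) (leP 0) (\<lambda>_. [])"
    unfolding quotient_map_def P0
  proof (intro conjI ballI impI)
    obtain x0 where x0: "x0 \<in> X" using X by blast
    have r0: "leX x0 x0" using X x0 by (simp add: finite_poset_def)
    show "(\<lambda>_. []) ` X = {[]}" using x0 by blast
    show "leP 0 [] []" for x y by (rule leP_refl)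
    fix p r assume "p \<in> {[]}" "r \<in> {[]}"
    then show "\<exists>x\<in>X. \<exists>y\<in>X. leX x y \<and> [] = p \<and> [] = r" using x0 r0 by blast
  qed
  from main_A[OF conjunct1[OF X] this] show "\<exists>n \<phi>. quotient_map (Pset n) (leP n) X leX \<phi>" by blast
next
  fix k and Y :: "'b set" and leY f
  assume "finite_poset Y leY \<and> quotient_map Y leY (Pset k) (leP k) f"
  then show "\<exists>l g. l > k \<and> quotient_map (Pset l) (leP l) Y leY g \<and> (\<forall>x\<in>Pset l. f (g x) = proj k x)"
    using main_A by blast
qed

end
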